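(* Let $n,r\ge 1$ and let $\mathcal{A}\subseteq \mathcal{I}^{(r)}(K_n^* )$ be an intersecting family. Then there exists an intersecting family $\mathcal{B}\subseteq\mathcal{I}^{(r)}(K_n^* )$ such that (1) $|\mathcal{A}|=|\mathcal{B}|$, and (2) for all $B_1,B_2\in\mathcal{B}$, $B_1\cap B_2\not\subseteq \{x_1,\dots,x_n\}=V(K_n)$.
   Context: $\mathcal{I}^{(r)}(G)$ denotes the family of all independent $r$-sets (sets of $r$ pairwise non-adjacent vertices) of a graph $G$. A family of sets is intersecting if every two of its members have nonempty intersection. For a graph $G$ with vertices $x_1,\dots,x_n$, the pendant graph $G^*$ has vertex set $\{x_1,\dots,x_n\}\sqcup\{p_1,\dots,p_n\}$ and edge set $E(G)\sqcup\{x_1p_1,\dots,x_np_n\}$; $K_n^*$ is the pendant graph of the complete graph $K_n$ on $x_1,\dots,x_n$. *)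

theory Defs
  imports Main
begin

text \<open>Vertices of the pendant graph K_n^*: core vertices X i (= x_(i+1)) and
pendant vertices P i (= p_(i+1)), for i < n (0-indexed).\<close>
datatype pvert = X nat | P nat

definition pendant_vertices :: "nat \<Rightarrow> pvert set" where
  "pendant_vertices n = X ` {..<n} \<union> P ` {..<n}"

fun Kstar_adj :: "pvert \<Rightarrow> pvert \<Rightarrow> bool" where
  "Kstar_adj (X i) (X j) = (i \<noteq> j)"
| "Kstar_adj (X i) (P j) = (i = j)"
| "Kstar_adj (P i) (X j) = (i = j)"
| "Kstar_adj (P i) (P j) = False"

definition indep_rsets :: "'a set \<Rightarrow> ('a \<Rightarrow> 'a \<Rightarrow> bool) \<Rightarrow> nat \<Rightarrow> 'a set set" where
  "indep_rsets V E r = {S. S \<subseteq> V \<and> card S = r \<and> finite S \<and> (\<forall>u\<in>S. \<forall>v\<in>S. \<not> E u v)}"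

definition intersecting :: "'a set set \<Rightarrow> bool" where
  "intersecting F \<longleftrightarrow> (\<forall>A\<in>F. \<forall>B\<in>F. A \<inter> B \<noteq> {})"

end

theory Submission
  imports Defs
begin

definition sft :: "nat \<Rightarrow> pvert set \<Rightarrow> pvert set" where
  "sft i S = insert (P i) (S - {X i})"

definition gsh :: "nat \<Rightarrow> pvert set set \<Rightarrow> pvert set \<Rightarrow> pvert set" where
  "gsh i F S = (if X i \<in> S \<and> sft i S \<notin> F then sft i S else S)"

definition sig :: "nat \<Rightarrow> pvert set set \<Rightarrow> pvert set set" where
  "sig i F = gsh i F ` F"

definition QQ :: "nat \<Rightarrow> pvert set set \<Rightarrow> bool" where
  "QQ j F \<longleftrightarrow> (\<forall>S\<in>F. \<forall>T\<in>F. S \<inter> T \<noteq> {X j})"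

lemma indep_XP: "S \<in> indep_rsets V Kstar_adj r \<Longrightarrow> X i \<in> S \<Longrightarrow> P i \<notin> S"
  unfolding indep_rsets_def by force

lemma indep_XX: "S \<in> indep_rsets V Kstar_adj r \<Longrightarrow> X i \<in> S \<Longrightarrow> X j \<in> S \<Longrightarrow> i = j"
  unfolding indep_rsets_def by force

lemma indep_sft:
  assumes "S \<in> indep_rsets (pendant_vertices n) Kstar_adj r" "X i \<in> S"
  shows "sft i S \<in> indep_rsets (pendant_vertices n) Kstar_adj r"
proof -
  have Pn: "P i \<notin> S" using indep_XP assms by blast
  have fin: "finite S" and cS: "card S = r" and sub: "S \<subseteq> pendant_vertices n"
    and ind: "\<forall>u\<in>S. \<forall>v\<in>S. \<not> Kstar_adj u v"
    using assms(1) unfolding indep_rsets_def by auto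
  have "i < n" using sub assms(2) unfolding pendant_vertices_def by auto
  hence "P i \<in> pendant_vertices n" unfolding pendant_vertices_def by auto
  hence s1: "sft i S \<subseteq> pendant_vertices n" using sub unfolding sft_def by auto
  have "card (sft i S) = card (S - {X i}) + 1" unfolding sft_def using fin Pn by simp
  also have "\<dots> = r" using cS fin assms(2) by (simp add: card_Diff_singleton)
       (metis One_nat_def Suc_pred card_gt_0_iff emptyE assms(2) fin)
  finally have s2: "card (sft i S) = r" .
  have s3: "\<forall>u\<in>sft i S. \<forall>v\<in>sft i S. \<not> Kstar_adj u v"
  proof (intro ballI)
    fix u v assume u: "u \<in> sft i S" and v: "v \<in> sft i S"
    have "X i \<notin> sft i S" unfolding sft_def by auto
    show "\<not> Kstar_adj u v"
    proof (cases "u = P i")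
      case True then show ?thesis using v \<open>X i \<notin> sft i S\<close> by (cases v) auto
    next
      case F1: False
      then have "u \<in> S" using u unfolding sft_def by auto
      show ?thesis
      proof (cases "v = P i")
        case True then show ?thesis using u \<open>X i \<notin> sft i S\<close> by (cases u) auto
      next
        case False
        then have "v \<in> S" using v unfolding sft_def by auto
        then show ?thesis using ind \<open>u \<in> S\<close> by blast
      qed
    qed
  qed
  show ?thesis using s1 s2 s3 fin unfolding indep_rsets_def sft_def by auto
qed


context
  fixes n r :: nat
begin

abbreviation "II \<equiv> indep_rsets (pendant_vertices n) Kstar_adj r"

lemma gsh_in:
  assumes "F \<subseteq> II" "S \<in> F" shows "gsh i F S \<in> II"
  using assms indep_sft unfolding gsh_def by auto

lemma sig_sub: "F \<subseteq> II \<Longrightarrow> sig i F \<subseteq> II"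
  using gsh_in unfolding sig_def by auto

lemma sft_inv: "X i \<in> S \<Longrightarrow> P i \<notin> S \<Longrightarrow> S = insert (X i) (sft i S - {P i})"
  unfolding sft_def by auto

lemma sig_inj: assumes "F \<subseteq> II" shows "inj_on (gsh i F) F"
proof
  fix S T assume S: "S \<in> F" and T: "T \<in> F" and e: "gsh i F S = gsh i F T"
  have PS: "X i \<in> S \<Longrightarrow> P i \<notin> S" using indep_XP S assms by blast
  have PT: "X i \<in> T \<Longrightarrow> P i \<notin> T" using indep_XP T assms by blast
  show "S = T"
  proof (cases "X i \<in> S \<and> sft i S \<notin> F")
    case c1: True
    show ?thesis
    proof (cases "X i \<in> T \<and> sft i T \<notin> F")
      case True
      then have "sft i S = sft i T" using c1 e unfolding gsh_def by auto
      then show ?thesis using sft_inv[of i S] sft_inv[of i T] c1 True PS PT by metis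
    next
      case False
      then have "sft i S = T" using c1 e unfolding gsh_def by auto
      then show ?thesis using c1 T by auto
    qed
  next
    case c1: False
    show ?thesis
    proof (cases "X i \<in> T \<and> sft i T \<notin> F")
      case True
      then have "sft i T = S" using c1 e unfolding gsh_def by auto
      then show ?thesis using True S by auto
    next
      case False
      then show ?thesis using c1 e unfolding gsh_def by auto
    qed
  qed
qed

lemma sig_card: "F \<subseteq> II \<Longrightarrow> card (sig i F) = card F"
  unfolding sig_def using sig_inj card_image by blast

lemma sig_int: assumes "F \<subseteq> II" "intersecting F" shows "intersecting (sig i F)"
  unfolding intersecting_def
proof (intro ballI)
  fix A B assume "A \<in> sig i F" "B \<in> sig i F"
  then obtain S T where S: "S \<in> F" and T: "T \<in> F" and A: "A = gsh i F S" and B: "B = gsh i F T"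
    unfolding sig_def by auto
  have ST: "S \<inter> T \<noteq> {}" using assms(2) S T unfolding intersecting_def by auto
  have key: "sft i U \<inter> W \<noteq> {}" if U: "U \<in> F" and W: "W \<in> F" and XU: "X i \<in> U"
     and nU: "X i \<in> W \<longrightarrow> sft i W \<in> F" for U W
  proof
    assume emp: "sft i U \<inter> W = {}"
    have "U \<inter> W \<noteq> {}" using assms(2) U W unfolding intersecting_def by auto
    then have UV: "U \<inter> W = {X i}" using emp unfolding sft_def by blast
    then have "X i \<in> W" by auto
    then have sV: "sft i W \<in> F" using nU by blast
    have PU: "P i \<notin> U" using indep_XP[of U _ r i] XU U assms(1) by blast
    have "sft i W \<inter> U \<noteq> {}" using assms(2) sV U unfolding intersecting_def by auto
    then show False using UV PU unfolding sft_def by blast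
  qed
  show "A \<inter> B \<noteq> {}"
  proof (cases "X i \<in> S \<and> sft i S \<notin> F")
    case c1: True
    show ?thesis
    proof (cases "X i \<in> T \<and> sft i T \<notin> F")
      case True
      then show ?thesis using c1 A B unfolding gsh_def sft_def by auto
    next
      case False
      then have "B = T" "A = sft i S" using A B c1 unfolding gsh_def by auto
      then show ?thesis using key[OF S T] c1 False by auto
    qed
  next
    case c1: False
    show ?thesis
    proof (cases "X i \<in> T \<and> sft i T \<notin> F")
      case True
      then have "A = S" "B = sft i T" using A B c1 unfolding gsh_def by auto
      then show ?thesis using key[OF T S] True c1 by auto
    next
      case False
      then show ?thesis using c1 A B ST unfolding gsh_def by auto
    qed
  qed
qed

lemma sig_QQ: assumes "F \<subseteq> II" "intersecting F" shows "QQ i (sig i F)"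
  unfolding QQ_def
proof (intro ballI notI)
  fix A B assume A: "A \<in> sig i F" and B: "B \<in> sig i F" and e: "A \<inter> B = {X i}"
  have nx: "X i \<notin> gsh i F U \<Longrightarrow> False" if "X i \<in> gsh i F U" "X i \<in> U \<and> sft i U \<notin> F" for U
    using that unfolding gsh_def sft_def by auto
  obtain S T where S: "S \<in> F" and T: "T \<in> F" and A': "A = gsh i F S" and B': "B = gsh i F T"
    using A B unfolding sig_def by auto
  have "X i \<in> A" "X i \<in> B" using e by auto
  then have AS: "A = S" and BT: "B = T" and sS: "sft i S \<in> F"
    using A' B' unfolding gsh_def sft_def by (auto split: if_splits)
  have "gsh i F (sft i S) = sft i S" unfolding gsh_def sft_def by auto
  then have "sft i S \<in> sig i F" using sS unfolding sig_def by force
  then have "sft i S \<inter> B \<noteq> {}" using sig_int[OF assms] B unfolding intersecting_def by auto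
  moreover have "P i \<notin> B" using indep_XP[of B _ r i] \<open>X i \<in> B\<close> sig_sub[OF assms(1)] B by blast
  ultimately show False using e AS unfolding sft_def by auto
qed

lemma sig_QQ_pres: assumes "F \<subseteq> II" "QQ j F" shows "QQ j (sig i F)"
  unfolding QQ_def
proof (intro ballI notI)
  fix A B assume A: "A \<in> sig i F" and B: "B \<in> sig i F" and e: "A \<inter> B = {X j}"
  obtain S T where S: "S \<in> F" and T: "T \<in> F" and A': "A = gsh i F S" and B': "B = gsh i F T"
    using A B unfolding sig_def by auto
  have "X j \<in> A" "X j \<in> B" using e by auto
  have "A = S"
  proof (rule ccontr)
    assume "A \<noteq> S"
    then have "X i \<in> S" "A = sft i S" using A' unfolding gsh_def by (auto split: if_splits)
    then have "j \<noteq> i" using \<open>X j \<in> A\<close> unfolding sft_def by auto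
    moreover have "X j \<in> S" using \<open>X j \<in> A\<close> \<open>A = sft i S\<close> unfolding sft_def by auto
    ultimately show False using indep_XX[of S _ r i j] \<open>X i \<in> S\<close> S assms(1) by blast
  qed
  moreover have "B = T"
  proof (rule ccontr)
    assume "B \<noteq> T"
    then have "X i \<in> T" "B = sft i T" using B' unfolding gsh_def by (auto split: if_splits)
    then have "j \<noteq> i" using \<open>X j \<in> B\<close> unfolding sft_def by auto
    moreover have "X j \<in> T" using \<open>X j \<in> B\<close> \<open>B = sft i T\<close> unfolding sft_def by auto
    ultimately show False using indep_XX[of T _ r i j] \<open>X i \<in> T\<close> T assms(1) by blast
  qed
  ultimately show False using assms(2) S T e unfolding QQ_def by auto
qed

end

fun sh :: "nat \<Rightarrow> pvert set set \<Rightarrow> pvert set set" where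
  "sh 0 F = F"
| "sh (Suc k) F = sig k (sh k F)"

lemma sh_props:
  assumes "F \<subseteq> indep_rsets (pendant_vertices n) Kstar_adj r" "intersecting F"
  shows "sh k F \<subseteq> indep_rsets (pendant_vertices n) Kstar_adj r \<and> intersecting (sh k F)
     \<and> card (sh k F) = card F \<and> (\<forall>j<k. QQ j (sh k F))"
proof (induction k)
  case 0 then show ?case using assms by simp
next
  case (Suc k)
  then have a: "sh k F \<subseteq> indep_rsets (pendant_vertices n) Kstar_adj r" "intersecting (sh k F)"
     "card (sh k F) = card F" "\<forall>j<k. QQ j (sh k F)" by auto
  have "\<forall>j<Suc k. QQ j (sig k (sh k F))"
  proof (intro allI impI)
    fix j assume "j < Suc k"
    then consider "j < k" | "j = k" by linarith
    then show "QQ j (sig k (sh k F))"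
      using sig_QQ[OF a(1,2)] sig_QQ_pres[OF a(1)] a(4) by cases auto
  qed
  then show ?case using sig_sub[OF a(1)] sig_int[OF a(1,2)] sig_card[OF a(1)] a(3) by simp
qed

theorem lemma3:
  fixes n r :: nat and \<A> :: "pvert set set"
  assumes "n \<ge> 1" and "r \<ge> 1"
    and "\<A> \<subseteq> indep_rsets (pendant_vertices n) Kstar_adj r"
    and "intersecting \<A>"
  shows "\<exists>\<B>. \<B> \<subseteq> indep_rsets (pendant_vertices n) Kstar_adj r \<and> intersecting \<B>
           \<and> card \<A> = card \<B>
           \<and> (\<forall>B1\<in>\<B>. \<forall>B2\<in>\<B>. \<not> (B1 \<inter> B2 \<subseteq> X ` {..<n}))"
proof -
  let ?B = "sh n \<A>"
  have h: "?B \<subseteq> indep_rsets (pendant_vertices n) Kstar_adj r" "intersecting ?B"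
     "card ?B = card \<A>" "\<forall>j<n. QQ j ?B"
    using sh_props[OF assms(3,4), of n] by auto
  have "\<not> (B1 \<inter> B2 \<subseteq> X ` {..<n})" if B1: "B1 \<in> ?B" and B2: "B2 \<in> ?B" for B1 B2
  proof
    assume sub: "B1 \<inter> B2 \<subseteq> X ` {..<n}"
    have "B1 \<inter> B2 \<noteq> {}" using h(2) B1 B2 unfolding intersecting_def by auto
    then obtain x where x: "x \<in> B1 \<inter> B2" by auto
    then obtain i where i: "i < n" "x = X i" using sub by auto
    have "B1 \<inter> B2 = {X i}"
    proof
      show "B1 \<inter> B2 \<subseteq> {X i}"
      proof
        fix y assume y: "y \<in> B1 \<inter> B2"
        then obtain j where "y = X j" using sub by auto
        then have "j = i" using indep_XX[of B1 _ r i j] y x i B1 h(1) by blast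
        then show "y \<in> {X i}" using \<open>y = X j\<close> by auto
      qed
    qed (use x i in auto)
    then show False using h(4) i B1 B2 unfolding QQ_def by auto
  qed
  then show ?thesis using h by (intro exI[of _ ?B]) auto
qed

end
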